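(* For any Euclidean function $\sigma$ on an integral domain $A$, the following conditions are equivalent: (a) $\sigma$ is non-archimedean and satisfies $\sigma(ab) = \sigma(a)+\sigma(b)$ for all $a,b \in A$. (b) The function $2^\sigma: A \to \mathbb{N}$, $a\mapsto 2^{\sigma(a)}$, is a non-archimedean norm on the domain $A$. (c) The function $2^\sigma$ is a norm on $A$, and the prime subring of $A$ is contained in $\{a \in A: \sigma(a) \leq \sigma(1)\} = A^\times \cup \{0\}$. (d) The function $2^\sigma$ is a norm on $A$, and $A$ contains a field. (e) The factroids of $A$ are the sets $C_n := \{a \in A: \sigma(a) \leq n\}$ for all $n \in \sigma(A) \cup \{\infty\}$ (which are distinct for all $n \in \sigma(A)$), and the level sets $D_n := \{a \in A: \sigma(a) = n\}$ satisfy $D_m D_n \subseteq D_{m+n}$ for all $m,n \in \sigma(A)$. Moreover, a domain $A$ admits a Euclidean function satisfying the equivalent conditions above if and only if $A$ is a field or $A \cong k[x]$ for some field $k$.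
   Context: A Euclidean function on an integral domain $A$ is a function $\sigma:A\to\mathbb{N}\cup\{-\infty\}$ such that $\sigma(a)=-\infty$ iff $a=0$; for all $a,b\in A$ with $b\neq 0$ there exist $q,r\in A$ with $a=bq+r$ and $\sigma(r)<\sigma(b)$; and $\sigma(a)\le\sigma(ab)$ for all $a,b$ with $b\ne0$. It is non-archimedean if $\sigma(a+b)\le\max\{\sigma(a),\sigma(b)\}$. Here $2^{-\infty}=0$. A norm on $A$ is a function $N:A\to\mathbb{R}_{\ge0}$ with $N(a)=0$ iff $a=0$, $N(ab)=N(a)N(b)$ and $N(a+b)\le N(a)+N(b)$; it is non-archimedean if $N(a+b)\le\max\{N(a),N(b)\}$. A factroid of $A$ is an additive subgroup $F$ of $A$ such that $ba\in F$ with $b\ne 0$ implies $a\in F$. $D_mD_n=\{xy\mid x\in D_m, y\in D_n\}$. *)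

theory Defs
  imports "HOL-Library.Extended_Real" "HOL-Computational_Algebra.Polynomial"
begin

definition euclidean_function :: "('a::idom \<Rightarrow> ereal) \<Rightarrow> bool" where
  "euclidean_function \<sigma> \<longleftrightarrow>
     (\<forall>a. \<sigma> a = -\<infinity> \<longleftrightarrow> a = 0) \<and>
     (\<forall>a. a \<noteq> 0 \<longrightarrow> (\<exists>n::nat. \<sigma> a = ereal (real n))) \<and>
     (\<forall>a b. b \<noteq> 0 \<longrightarrow> (\<exists>q r. a = b * q + r \<and> \<sigma> r < \<sigma> b)) \<and>
     (\<forall>a b. b \<noteq> 0 \<longrightarrow> \<sigma> a \<le> \<sigma> (a * b))"

definition nonarch_euclidean :: "('a::idom \<Rightarrow> ereal) \<Rightarrow> bool" where
  "nonarch_euclidean \<sigma> \<longleftrightarrow> (\<forall>a b. \<sigma> (a + b) \<le> max (\<sigma> a) (\<sigma> b))"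

definition pow2 :: "ereal \<Rightarrow> real" where
  "pow2 x = (if x = -\<infinity> then 0 else 2 powr real_of_ereal x)"

definition is_norm :: "('a::idom \<Rightarrow> real) \<Rightarrow> bool" where
  "is_norm N \<longleftrightarrow>
     (\<forall>a. N a \<ge> 0) \<and> (\<forall>a. N a = 0 \<longleftrightarrow> a = 0) \<and>
     (\<forall>a b. N (a * b) = N a * N b) \<and> (\<forall>a b. N (a + b) \<le> N a + N b)"

definition nonarch_norm :: "('a::idom \<Rightarrow> real) \<Rightarrow> bool" where
  "nonarch_norm N \<longleftrightarrow> is_norm N \<and> (\<forall>a b. N (a + b) \<le> max (N a) (N b))"

definition factroid :: "'a::idom set \<Rightarrow> bool" where
  "factroid F \<longleftrightarrow>
     0 \<in> F \<and> (\<forall>x\<in>F. \<forall>y\<in>F. x + y \<in> F) \<and> (\<forall>x\<in>F. - x \<in> F) \<and>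
     (\<forall>a b. b \<noteq> 0 \<and> b * a \<in> F \<longrightarrow> a \<in> F)"

definition subfield :: "'a::idom set \<Rightarrow> bool" where
  "subfield K \<longleftrightarrow>
     0 \<in> K \<and> 1 \<in> K \<and> (\<forall>x\<in>K. \<forall>y\<in>K. x + y \<in> K \<and> x * y \<in> K) \<and> (\<forall>x\<in>K. - x \<in> K) \<and>
     (\<forall>x\<in>K. x \<noteq> 0 \<longrightarrow> (\<exists>y\<in>K. x * y = 1))"

definition is_field_dom :: "'a::idom itself \<Rightarrow> bool" where
  "is_field_dom _ \<longleftrightarrow> (\<forall>a::'a. a \<noteq> 0 \<longrightarrow> a dvd 1)"

text \<open>\<open>A \<cong> k[x]\<close> for a field \<open>k\<close>: internally, there is a subfield \<open>K\<close> and an element \<open>x\<close>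
  such that every element of \<open>A\<close> is uniquely a polynomial in \<open>x\<close> with coefficients in \<open>K\<close>.\<close>
definition is_poly_ring_over_field :: "'a::idom itself \<Rightarrow> bool" where
  "is_poly_ring_over_field _ \<longleftrightarrow>
     (\<exists>(K::'a set) x. subfield K \<and>
        (\<forall>a. \<exists>!p::'a poly. (\<forall>i. coeff p i \<in> K) \<and> poly p x = a))"

definition C_set :: "('a \<Rightarrow> ereal) \<Rightarrow> ereal \<Rightarrow> 'a set" where
  "C_set \<sigma> n = {a. \<sigma> a \<le> n}"

definition D_set :: "('a \<Rightarrow> ereal) \<Rightarrow> ereal \<Rightarrow> 'a set" where
  "D_set \<sigma> n = {a. \<sigma> a = n}"

definition cond_a :: "('a::idom \<Rightarrow> ereal) \<Rightarrow> bool" where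
  "cond_a \<sigma> \<longleftrightarrow> nonarch_euclidean \<sigma> \<and> (\<forall>a b. \<sigma> (a * b) = \<sigma> a + \<sigma> b)"

definition cond_b :: "('a::idom \<Rightarrow> ereal) \<Rightarrow> bool" where
  "cond_b \<sigma> \<longleftrightarrow> nonarch_norm (\<lambda>a. pow2 (\<sigma> a))"

definition cond_c :: "('a::idom \<Rightarrow> ereal) \<Rightarrow> bool" where
  "cond_c \<sigma> \<longleftrightarrow> is_norm (\<lambda>a. pow2 (\<sigma> a)) \<and> range (of_int :: int \<Rightarrow> 'a) \<subseteq> {a. \<sigma> a \<le> \<sigma> 1}"

definition cond_d :: "('a::idom \<Rightarrow> ereal) \<Rightarrow> bool" where
  "cond_d \<sigma> \<longleftrightarrow> is_norm (\<lambda>a. pow2 (\<sigma> a)) \<and> (\<exists>K::'a set. subfield K)"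

definition cond_e :: "('a::idom \<Rightarrow> ereal) \<Rightarrow> bool" where
  "cond_e \<sigma> \<longleftrightarrow>
     {F. factroid F} = C_set \<sigma> ` (range \<sigma> \<union> {\<infinity>}) \<and>
     inj_on (C_set \<sigma>) (range \<sigma>) \<and>
     (\<forall>m\<in>range \<sigma>. \<forall>n\<in>range \<sigma>.
        {x * y | x y. x \<in> D_set \<sigma> m \<and> y \<in> D_set \<sigma> n} \<subseteq> D_set \<sigma> (m + n))"

end

theory Submission
  imports Defs
begin

locale eucl =
  fixes \<sigma> :: "'a::idom \<Rightarrow> ereal"
  assumes ef: "euclidean_function \<sigma>"
begin

definition sn :: "'a \<Rightarrow> nat" where "sn a = nat \<lfloor>real_of_ereal (\<sigma> a)\<rfloor>"

lemma sig0[simp]: "\<sigma> 0 = -\<infinity>"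
  using ef unfolding euclidean_function_def by blast

lemma sig_s: "a \<noteq> 0 \<Longrightarrow> \<sigma> a = ereal (real (sn a))"
proof -
  assume "a \<noteq> 0"
  then obtain n :: nat where "\<sigma> a = ereal (real n)" using ef unfolding euclidean_function_def by blast
  then show ?thesis unfolding sn_def by simp
qed

lemma sn0[simp]: "sn 0 = 0"
  unfolding sn_def by simp

lemma sig_le_iff: "a \<noteq> 0 \<Longrightarrow> b \<noteq> 0 \<Longrightarrow> \<sigma> a \<le> \<sigma> b \<longleftrightarrow> sn a \<le> sn b"
  by (simp add: sig_s)

lemma sig_less_iff: "a \<noteq> 0 \<Longrightarrow> b \<noteq> 0 \<Longrightarrow> \<sigma> a < \<sigma> b \<longleftrightarrow> sn a < sn b"
  by (simp add: sig_s)

lemma sn_mono: "b \<noteq> 0 \<Longrightarrow> sn a \<le> sn (a*b)"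
proof (cases "a = 0")
  case True then show ?thesis by simp
next
  case False
  assume b: "b \<noteq> 0"
  have "\<sigma> a \<le> \<sigma> (a*b)" using ef b unfolding euclidean_function_def by blast
  then show ?thesis using False b by (simp add: sig_le_iff)
qed

lemma divi: "b \<noteq> 0 \<Longrightarrow> \<exists>q r. a = b*q + r \<and> (r = 0 \<or> sn r < sn b)"
proof -
  assume b: "b \<noteq> 0"
  then obtain q r where "a = b*q + r" "\<sigma> r < \<sigma> b" using ef unfolding euclidean_function_def by blast
  then show ?thesis using b by (metis sig_less_iff)
qed

lemma sn1_min: "a \<noteq> 0 \<Longrightarrow> sn 1 \<le> sn a"
  using sn_mono[of a 1] by simp

lemma units: "a \<noteq> 0 \<Longrightarrow> sn a \<le> sn 1 \<longleftrightarrow> a dvd 1"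
proof
  assume a: "a \<noteq> 0" "sn a \<le> sn 1"
  obtain q r where qr: "1 = a*q + r" "r = 0 \<or> sn r < sn a" using divi[OF a(1)] by blast
  have "r = 0" using qr(2) a(2) sn1_min[of r] by (metis leD le_trans)
  then show "a dvd 1" using qr by (metis add.right_neutral dvdI)
next
  assume a: "a \<noteq> 0" "a dvd 1"
  then obtain q where "1 = a*q" by auto
  then show "sn a \<le> sn 1" using sn_mono[of q a] by (metis mult_zero_right zero_neq_one)
qed

lemma C1: "{a. \<sigma> a \<le> \<sigma> 1} = {a. a dvd 1} \<union> {0}"
proof -
  have "\<sigma> a \<le> \<sigma> 1 \<longleftrightarrow> a dvd 1 \<or> a = 0" for a
    by (cases "a = 0") (simp_all add: sig_le_iff units)
  then show ?thesis by auto
qed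

lemma pow2_minf[simp]: "pow2 (-\<infinity>) = 0" by (simp add: pow2_def)

lemma N_eq[simp]: "pow2 (\<sigma> a) = (if a = 0 then 0 else 2 ^ sn a)"
  by (simp add: pow2_def sig_s powr_realpow)

definition addv where "addv \<longleftrightarrow> (\<forall>a b. a \<noteq> 0 \<longrightarrow> b \<noteq> 0 \<longrightarrow> sn (a*b) = sn a + sn b)"
definition nonarch where "nonarch \<longleftrightarrow> (\<forall>a b. sn (a+b) \<le> max (sn a) (sn b))"

lemma na_pt: "\<sigma> (a+b) \<le> max (\<sigma> a) (\<sigma> b) \<longleftrightarrow> sn (a+b) \<le> max (sn a) (sn b)"
  by (cases "a = 0"; cases "b = 0"; cases "a+b = 0") (simp_all add: sig_s max_def)

lemma mul_pt: "\<sigma> (a*b) = \<sigma> a + \<sigma> b \<longleftrightarrow> (a \<noteq> 0 \<longrightarrow> b \<noteq> 0 \<longrightarrow> sn (a*b) = sn a + sn b)"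
  by (cases "a = 0"; cases "b = 0") (simp_all add: sig_s flip: of_nat_add)

lemma cond_a_iff: "cond_a \<sigma> \<longleftrightarrow> addv \<and> nonarch"
  unfolding cond_a_def nonarch_euclidean_def addv_def nonarch_def na_pt mul_pt by blast

lemma Nmul_pt: "pow2 (\<sigma> (a*b)) = pow2 (\<sigma> a) * pow2 (\<sigma> b) \<longleftrightarrow> (a \<noteq> 0 \<longrightarrow> b \<noteq> 0 \<longrightarrow> sn (a*b) = sn a + sn b)"
proof (cases "a = 0 \<or> b = 0")
  case True then show ?thesis by (auto simp: N_eq)
next
  case False
  then have "pow2 (\<sigma> (a*b)) = pow2 (\<sigma> a) * pow2 (\<sigma> b) \<longleftrightarrow> (2::real) ^ sn (a*b) = 2 ^ (sn a + sn b)"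
    by (simp add: N_eq power_add)
  also have "\<dots> \<longleftrightarrow> sn (a*b) = sn a + sn b" by (rule power_inject_exp) simp
  finally show ?thesis using False by simp
qed

lemma Nna_pt: "pow2 (\<sigma> (a+b)) \<le> max (pow2 (\<sigma> a)) (pow2 (\<sigma> b)) \<longleftrightarrow> sn (a+b) \<le> max (sn a) (sn b)"
proof -
  have m: "max ((2::real) ^ m) (2 ^ n) = 2 ^ max m n" for m n
    by (simp add: max_def)
  show ?thesis
    by (cases "a = 0"; cases "b = 0"; cases "a+b = 0") (simp_all add: N_eq m)
qed

lemma is_norm_addv: "is_norm (\<lambda>a. pow2 (\<sigma> a)) \<Longrightarrow> addv"
  unfolding is_norm_def addv_def using Nmul_pt by blast

lemma cond_b_iff: "cond_b \<sigma> \<longleftrightarrow> addv \<and> nonarch"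
proof
  assume "cond_b \<sigma>"
  then show "addv \<and> nonarch" unfolding cond_b_def nonarch_norm_def nonarch_def
    using is_norm_addv Nna_pt by blast
next
  assume h: "addv \<and> nonarch"
  have nn: "pow2 (\<sigma> a) \<ge> 0" for a by (simp add: N_eq)
  have z: "pow2 (\<sigma> a) = 0 \<longleftrightarrow> a = 0" for a by (simp add: N_eq)
  have mu: "pow2 (\<sigma> (a*b)) = pow2 (\<sigma> a) * pow2 (\<sigma> b)" for a b using h Nmul_pt addv_def by blast
  have na: "pow2 (\<sigma> (a+b)) \<le> max (pow2 (\<sigma> a)) (pow2 (\<sigma> b))" for a b using h Nna_pt nonarch_def by blast
  have tr: "pow2 (\<sigma> (a+b)) \<le> pow2 (\<sigma> a) + pow2 (\<sigma> b)" for a b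
    using na[of a b] nn[of a] nn[of b] by linarith
  show "cond_b \<sigma>" unfolding cond_b_def nonarch_norm_def is_norm_def
    using nn z mu na tr by blast
qed

end


context eucl begin

lemma addvD: "addv \<Longrightarrow> a \<noteq> 0 \<Longrightarrow> b \<noteq> 0 \<Longrightarrow> sn (a*b) = sn a + sn b"
  unfolding addv_def by blast

lemma addv_1: "addv \<Longrightarrow> sn 1 = 0"
  using addvD[of 1 1] by simp

lemma addv_m1: "addv \<Longrightarrow> sn (-1) = 0"
proof -
  assume h: addv
  have hh: "\<forall>a b. a \<noteq> 0 \<longrightarrow> b \<noteq> 0 \<longrightarrow> sn (a*b) = sn a + sn b" using h addv_def by blast
  have "sn ((-1) * (-1::'a)) = sn (-1) + sn (-1)" by (rule hh[rule_format]) simp_all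
  then show ?thesis using addv_1[OF h] by simp
qed

lemma addv_neg: "addv \<Longrightarrow> sn (-a) = sn a"
proof (cases "a = 0")
  case False
  assume h: addv
  have hh: "\<forall>a b. a \<noteq> 0 \<longrightarrow> b \<noteq> 0 \<longrightarrow> sn (a*b) = sn a + sn b" using h addv_def by blast
  have "sn ((-1) * a) = sn (-1) + sn a" by (rule hh[rule_format]) (simp_all add: False)
  then show ?thesis using addv_m1[OF h] by simp
qed simp

lemma int_sn: "addv \<Longrightarrow> nonarch \<Longrightarrow> sn (of_int k) = 0"
proof -
  assume h: addv nonarch
  have n: "sn (of_nat n) = 0" for n
  proof (induction n)
    case (Suc n)
    have "sn (of_nat n + 1) \<le> max (sn (of_nat n)) (sn 1)" using h(2) unfolding nonarch_def by blast
    then show ?case using Suc addv_1[OF h(1)] by (simp add: add.commute)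
  qed simp
  show ?thesis
  proof (cases "k \<ge> 0")
    case True
    then show ?thesis using n[of "nat k"] by simp
  next
    case False
    then have "of_int k = - (of_nat (nat (-k)) :: 'a)" by simp
    then show ?thesis using n[of "nat (-k)"] addv_neg[OF h(1)] by simp
  qed
qed

lemma b_c: "cond_b \<sigma> \<Longrightarrow> cond_c \<sigma>"
proof -
  assume b: "cond_b \<sigma>"
  then have h: addv nonarch using cond_b_iff by auto
  have "\<sigma> (of_int k) \<le> \<sigma> 1" for k
    by (cases "(of_int k :: 'a) = 0") (simp_all add: sig_le_iff int_sn[OF h] addv_1[OF h(1)])
  then show ?thesis using b unfolding cond_c_def cond_b_def nonarch_norm_def by auto
qed

lemma c_d: "cond_c \<sigma> \<Longrightarrow> cond_d \<sigma>"
proof -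
  assume c: "cond_c \<sigma>"
  then have u: "of_int k \<noteq> (0::'a) \<Longrightarrow> (of_int k :: 'a) dvd 1" for k
    using C1 unfolding cond_c_def by blast
  define K where "K = {a::'a. \<exists>m n. of_int n \<noteq> (0::'a) \<and> of_int n * a = of_int m}"
  have "subfield K" unfolding subfield_def
  proof (intro conjI ballI impI)
    have "of_int 1 \<noteq> (0::'a) \<and> of_int 1 * 0 = (of_int 0 :: 'a)" by simp
    then show "0 \<in> K" unfolding K_def by blast
    have "of_int 1 \<noteq> (0::'a) \<and> of_int 1 * 1 = (of_int 1 :: 'a)" by simp
    then show "1 \<in> K" unfolding K_def by blast
  next
    fix x y assume "x \<in> K" "y \<in> K"
    then obtain m1 n1 m2 n2 where a: "of_int n1 \<noteq> (0::'a)" "of_int n1 * x = of_int m1"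
      and b: "of_int n2 \<noteq> (0::'a)" "of_int n2 * y = of_int m2" unfolding K_def by blast
    have nz: "of_int (n1*n2) \<noteq> (0::'a)" using a b by simp
    have "of_int (n1*n2) * (x+y) = (of_int (m1*n2 + m2*n1) :: 'a)"
      using a b by (simp add: algebra_simps)
    then show "x + y \<in> K" unfolding K_def using nz by blast
    have "of_int (n1*n2) * (x*y) = (of_int (m1*m2) :: 'a)"
      using a b by (simp add: algebra_simps)
    then show "x * y \<in> K" unfolding K_def using nz by blast
  next
    fix x assume "x \<in> K"
    then obtain m n where a: "of_int n \<noteq> (0::'a)" "of_int n * x = of_int m" unfolding K_def by blast
    have "of_int n * (-x) = (of_int (-m) :: 'a)" using a by simp
    then show "-x \<in> K" unfolding K_def using a by blast
  next
    fix x assume "x \<in> K" "x \<noteq> 0"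
    then obtain m n where a: "of_int n \<noteq> (0::'a)" "of_int n * x = of_int m" unfolding K_def by blast
    have m0: "of_int m \<noteq> (0::'a)" using a \<open>x \<noteq> 0\<close> by auto
    have "of_int m dvd (1::'a)" using u m0 by blast
    then obtain w where w: "1 = (of_int m :: 'a) * w" unfolding dvd_def by blast
    define y where "y = of_int n * w"
    have xy: "x * y = 1"
    proof -
      have "x * y = (of_int n * x) * w" by (simp add: y_def ac_simps)
      also have "\<dots> = of_int m * w" by (simp only: a(2))
      finally show ?thesis using w by simp
    qed
    have my: "of_int m * y = of_int n"
    proof -
      have "of_int m * y = of_int n * (of_int m * w)" by (simp add: y_def ac_simps)
      then show ?thesis by (simp only: w[symmetric] mult_1_right)
    qed
    show "\<exists>y\<in>K. x * y = 1" unfolding K_def using m0 xy my by blast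
  qed
  then show ?thesis using c unfolding cond_c_def cond_d_def by blast
qed

lemma d_b: "cond_d \<sigma> \<Longrightarrow> cond_b \<sigma>"
proof -
  assume d: "cond_d \<sigma>"
  then have nrm: "is_norm (\<lambda>a. pow2 (\<sigma> a))" and h: addv unfolding cond_d_def using is_norm_addv by auto
  obtain K where K: "subfield (K::'a set)" using d unfolding cond_d_def by auto
  have s1: "sn 1 = 0" using addv_1[OF h] .
  have Ku: "sn u = 0" if uK: "u \<in> K" for u
  proof (cases "u = 0")
    case False
    then obtain v where "u * v = 1" using K uK unfolding subfield_def by blast
    then have "v \<noteq> 0" by auto
    then have "sn (u*v) = sn u + sn v" using addvD[OF h False] by blast
    then have "sn u + sn v = 0" using s1 \<open>u * v = 1\<close> by simp
    then show ?thesis by simp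
  qed simp
  have "(2::'a) \<in> K" using K unfolding subfield_def by (metis one_add_one)
  then have N2: "pow2 (\<sigma> (2::'a)) \<le> 1" using Ku by simp
  have mul: "pow2 (\<sigma> (x*y)) = pow2 (\<sigma> x) * pow2 (\<sigma> y)" for x y using nrm unfolding is_norm_def by blast
  have tri: "pow2 (\<sigma> (x+y)) \<le> pow2 (\<sigma> x) + pow2 (\<sigma> y)" for x y using nrm unfolding is_norm_def by blast
  have nn: "pow2 (\<sigma> x) \<ge> 0" for x by simp
  have "sn (a+b) \<le> max (sn a) (sn b)" for a b
  proof (rule ccontr)
    assume nt: "\<not> sn (a+b) \<le> max (sn a) (sn b)"
    define M where "M = max (sn a) (sn b)"
    define X where "X = (2::real) ^ M"
    have Xp: "X > 0" unfolding X_def by simp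
    have gt: "sn (a+b) \<ge> Suc M" using nt M_def by simp
    have ab0: "a + b \<noteq> 0"
    proof
      assume "a + b = 0" then show False using gt by simp
    qed
    have "pow2 (\<sigma> (a+b)) = 2 ^ sn (a+b)" using ab0 by simp
    also have "\<dots> \<ge> 2 ^ Suc M" by (rule power_increasing[OF gt]) simp
    finally have G: "pow2 (\<sigma> (a+b)) \<ge> 2 * X" unfolding X_def by simp
    have A: "pow2 (\<sigma> a) \<le> X" unfolding X_def M_def by (simp add: power_increasing)
    have B: "pow2 (\<sigma> b) \<le> X" unfolding X_def M_def by (simp add: power_increasing)
    have eq: "(a+b)*(a+b) = a*a + (2*(a*b) + b*b)" by (simp add: algebra_simps)
    have "pow2 (\<sigma> (a+b)) * pow2 (\<sigma> (a+b)) = pow2 (\<sigma> ((a+b)*(a+b)))" by (rule mul[symmetric])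
    also have "\<dots> = pow2 (\<sigma> (a*a + (2*(a*b) + b*b)))" by (simp only: eq)
    also have "\<dots> \<le> pow2 (\<sigma> (a*a)) + (pow2 (\<sigma> (2*(a*b))) + pow2 (\<sigma> (b*b)))"
    proof -
      have t1: "pow2 (\<sigma> (a*a + (2*(a*b) + b*b))) \<le> pow2 (\<sigma> (a*a)) + pow2 (\<sigma> (2*(a*b) + b*b))" by (rule tri)
      have t2: "pow2 (\<sigma> (2*(a*b) + b*b)) \<le> pow2 (\<sigma> (2*(a*b))) + pow2 (\<sigma> (b*b))" by (rule tri)
      show ?thesis using t1 t2 by linarith
    qed
    also have "\<dots> = pow2 (\<sigma> a) * pow2 (\<sigma> a) + (pow2 (\<sigma> 2) * (pow2 (\<sigma> a) * pow2 (\<sigma> b)) + pow2 (\<sigma> b) * pow2 (\<sigma> b))"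
      by (simp only: mul)
    also have "\<dots> \<le> X * X + (1 * (X * X) + X * X)"
    proof -
      have Xn: "0 \<le> X" using Xp by simp
      have m1: "pow2 (\<sigma> a) * pow2 (\<sigma> a) \<le> X * X" by (rule mult_mono[OF A A Xn nn])
      have m2: "pow2 (\<sigma> b) * pow2 (\<sigma> b) \<le> X * X" by (rule mult_mono[OF B B Xn nn])
      have m3: "pow2 (\<sigma> a) * pow2 (\<sigma> b) \<le> X * X" by (rule mult_mono[OF A B Xn nn])
      have m4: "pow2 (\<sigma> 2) * (pow2 (\<sigma> a) * pow2 (\<sigma> b)) \<le> 1 * (X * X)"
        by (rule mult_mono[OF N2 m3]) simp_all
      show ?thesis using m1 m2 m4 by linarith
    qed
    finally have "pow2 (\<sigma> (a+b)) * pow2 (\<sigma> (a+b)) \<le> 3 * (X*X)" by simp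
    moreover have "pow2 (\<sigma> (a+b)) * pow2 (\<sigma> (a+b)) \<ge> (2*X) * (2*X)"
      using G Xp by (intro mult_mono) simp_all
    moreover have "X*X > 0" using Xp by simp
    moreover have "(2*X)*(2*X) = 4*(X*X)" by simp
    ultimately show False by linarith
  qed
  then show ?thesis using cond_b_iff h nonarch_def by blast
qed

lemma e_a: "cond_e \<sigma> \<Longrightarrow> cond_a \<sigma>"
proof -
  assume e: "cond_e \<sigma>"
  have "\<sigma> (a*b) = \<sigma> a + \<sigma> b" for a b
  proof -
    have "a*b \<in> {x * y | x y. x \<in> D_set \<sigma> (\<sigma> a) \<and> y \<in> D_set \<sigma> (\<sigma> b)}" unfolding D_set_def by blast
    then have "a*b \<in> D_set \<sigma> (\<sigma> a + \<sigma> b)" using e unfolding cond_e_def by blast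
    then show ?thesis unfolding D_set_def by simp
  qed
  then have h1: addv using mul_pt addv_def by blast
  have "\<sigma> (a+b) \<le> max (\<sigma> a) (\<sigma> b)" for a b
  proof -
    have "max (\<sigma> a) (\<sigma> b) \<in> range \<sigma> \<union> {\<infinity>}" by (simp add: max_def)
    then have "factroid (C_set \<sigma> (max (\<sigma> a) (\<sigma> b)))" using e unfolding cond_e_def by blast
    moreover have "a \<in> C_set \<sigma> (max (\<sigma> a) (\<sigma> b))" "b \<in> C_set \<sigma> (max (\<sigma> a) (\<sigma> b))"
      unfolding C_set_def by auto
    ultimately have "a + b \<in> C_set \<sigma> (max (\<sigma> a) (\<sigma> b))" unfolding factroid_def by blast
    then show ?thesis unfolding C_set_def by simp
  qed
  then show ?thesis unfolding cond_a_def nonarch_euclidean_def using \<open>\<And>a b. \<sigma> (a*b) = \<sigma> a + \<sigma> b\<close> by blast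
qed

end


locale addeucl = eucl +
  assumes av: addv and na: nonarch
begin

lemma mulD: "a \<noteq> 0 \<Longrightarrow> b \<noteq> 0 \<Longrightarrow> sn (a*b) = sn a + sn b"
  using addvD[OF av] .

lemma s1[simp]: "sn 1 = 0" using addv_1[OF av] .

lemma sneg[simp]: "sn (-a) = sn a" using addv_neg[OF av] .

lemma nadd: "sn (a+b) \<le> max (sn a) (sn b)" using na unfolding nonarch_def by blast

lemma nsub: "sn (a-b) \<le> max (sn a) (sn b)" using nadd[of a "-b"] by simp

lemma strict: "sn b < sn a \<Longrightarrow> sn (a+b) = sn a \<and> a + b \<noteq> 0"
proof -
  assume lt: "sn b < sn a"
  have "sn a = sn ((a+b) + (-b))" by simp
  also have "\<dots> \<le> max (sn (a+b)) (sn b)" using nadd[of "a+b" "-b"] by simp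
  finally have "sn a \<le> sn (a+b)" using lt by simp
  moreover have "sn (a+b) \<le> sn a" using nadd[of a b] lt by simp
  ultimately have e: "sn (a+b) = sn a" by simp
  moreover have "a + b \<noteq> 0" using e lt by (metis not_less0 sn0)
  ultimately show ?thesis by simp
qed

lemma unit_sn: "a \<noteq> 0 \<Longrightarrow> sn a = 0 \<longleftrightarrow> a dvd 1"
  using units[of a] by simp

definition K :: "'a set" where "K = {a. sn a = 0}"

lemma subfield_K: "subfield K"
  unfolding subfield_def K_def
proof (intro conjI ballI impI; simp?)
  fix a b assume a: "sn a = 0" and b: "sn b = 0"
  show "sn (a+b) = 0" using nadd[of a b] a b by simp
  show "sn (a*b) = 0" using a b mulD[of a b] by (cases "a = 0 \<or> b = 0") auto
next
  fix a assume a: "sn a = 0" "a \<noteq> 0"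
  then obtain y where y: "1 = a * y" using unit_sn by (meson dvdE)
  then have "y \<noteq> 0" by auto
  then have "sn (a*y) = sn a + sn y" using mulD a by blast
  then have "sn y = 0" using y a by simp
  then show "\<exists>y. sn y = 0 \<and> a * y = 1" using y by auto
qed

lemma field_case: "(\<forall>a. sn a = 0) \<Longrightarrow> is_field_dom TYPE('a)"
  unfolding is_field_dom_def using unit_sn by blast

end

locale addeucl_x = addeucl +
  fixes x :: 'a
  assumes xpos: "sn x > 0" and xmin: "\<And>a. sn a > 0 \<Longrightarrow> sn x \<le> sn a"
begin

lemma x0: "x \<noteq> 0" using xpos by (metis less_irrefl sn0)

definition Kp :: "'a poly \<Rightarrow> bool" where "Kp p \<longleftrightarrow> (\<forall>i. sn (coeff p i) = 0)"

lemma small_rem: "r = 0 \<or> sn r < sn x \<Longrightarrow> sn r = 0"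
  using xmin[of r] by (cases "r = 0") (auto simp: not_le)

lemma Kp_pCons: "Kp (pCons c p) \<longleftrightarrow> sn c = 0 \<and> Kp p"
  unfolding Kp_def
proof
  assume h: "\<forall>i. sn (coeff (pCons c p) i) = 0"
  have "sn c = 0" using h[rule_format, of 0] by simp
  moreover have "sn (coeff p i) = 0" for i using h[rule_format, of "Suc i"] by simp
  ultimately show "sn c = 0 \<and> (\<forall>i. sn (coeff p i) = 0)" by blast
next
  assume h: "sn c = 0 \<and> (\<forall>i. sn (coeff p i) = 0)"
  show "\<forall>i. sn (coeff (pCons c p) i) = 0"
  proof
    fix i show "sn (coeff (pCons c p) i) = 0" using h by (cases i) simp_all
  qed
qed

lemma Kp0[simp]: "Kp 0" unfolding Kp_def by simp

lemma poly_sn: "Kp p \<Longrightarrow> p \<noteq> 0 \<Longrightarrow> poly p x \<noteq> 0 \<and> sn (poly p x) = sn x * degree p"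
proof (induction p rule: pCons_induct)
  case 0 then show ?case by simp
next
  case (pCons c p)
  have c: "sn c = 0" and kp: "Kp p" using pCons.prems(1) Kp_pCons by auto
  show ?case
  proof (cases "p = 0")
    case True
    then have "c \<noteq> 0" using pCons.hyps by simp
    then show ?thesis using True c by simp
  next
    case False
    have ih: "poly p x \<noteq> 0" "sn (poly p x) = sn x * degree p" using pCons.IH[OF kp False] by auto
    have s: "sn (x * poly p x) = sn x + sn x * degree p" using mulD[OF x0 ih(1)] ih(2) by simp
    have "sn c < sn (x * poly p x)" using s c xpos by simp
    from strict[OF this] have "sn (x * poly p x + c) = sn (x * poly p x) \<and> x * poly p x + c \<noteq> 0" .
    then show ?thesis using s False by (simp add: add.commute)
  qed
qed

lemma Kp_diff: "Kp p \<Longrightarrow> Kp q \<Longrightarrow> Kp (p - q)"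
  unfolding Kp_def using nsub by (simp) (metis le_zero_eq max.idem)

lemma rep_uniq: "Kp p \<Longrightarrow> Kp q \<Longrightarrow> poly p x = poly q x \<Longrightarrow> p = q"
proof (rule ccontr)
  assume h: "Kp p" "Kp q" "poly p x = poly q x" "p \<noteq> q"
  then have "p - q \<noteq> 0" by simp
  then have "poly (p - q) x \<noteq> 0" using poly_sn Kp_diff[OF h(1,2)] by blast
  then show False using h(3) by simp
qed

lemma rep_ex: "\<exists>p. Kp p \<and> poly p x = a"
proof -
  have "\<forall>a. sn a = n \<longrightarrow> (\<exists>p. Kp p \<and> poly p x = a)" for n
  proof (induction n rule: less_induct)
    case (less n)
    show ?case
    proof (intro allI impI)
      fix a assume an: "sn a = n"
      show "\<exists>p. Kp p \<and> poly p x = a"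
      proof (cases "n = 0")
        case True
        then have "Kp [:a:]" using an Kp_pCons by simp
        then show ?thesis by (intro exI[of _ "[:a:]"]) simp
      next
        case False
        obtain q r where qr: "a = x*q + r" "r = 0 \<or> sn r < sn x" using divi[OF x0] by blast
        have r0: "sn r = 0" using small_rem[OF qr(2)] .
        have "q \<noteq> 0" using qr(1) r0 an False by auto
        have "sn (-r) < sn a" using r0 an False by simp
        from strict[OF this] have "sn (a + -r) = sn a" by simp
        moreover have "a + -r = x*q" using qr(1) by simp
        ultimately have "sn x + sn q = sn a" using mulD[OF x0 \<open>q \<noteq> 0\<close>] by simp
        then have "sn q < n" using xpos an by simp
        then obtain p where p: "Kp p" "poly p x = q" using less.IH by blast
        have "Kp (pCons r p)" using Kp_pCons r0 p(1) by simp
        moreover have "poly (pCons r p) x = a" using p(2) qr(1) by (simp add: add.commute)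
        ultimately show ?thesis by blast
      qed
    qed
  qed
  then show ?thesis by blast
qed

lemma poly_ring: "is_poly_ring_over_field TYPE('a)"
  unfolding is_poly_ring_over_field_def
proof (intro exI conjI allI)
  show "subfield K" by (rule subfield_K)
  fix a
  obtain p where p: "Kp p" "poly p x = a" using rep_ex by blast
  show "\<exists>!p. (\<forall>i. coeff p i \<in> K) \<and> poly p x = a"
  proof (rule ex1I[of _ p])
    show "(\<forall>i. coeff p i \<in> K) \<and> poly p x = a" using p unfolding K_def Kp_def by simp
  next
    fix q assume "(\<forall>i. coeff q i \<in> K) \<and> poly q x = a"
    then have "Kp q" "poly q x = a" unfolding K_def Kp_def by auto
    then show "q = p" using rep_uniq p by metis
  qed
qed

lemma sn_mult: "\<exists>j. sn a = sn x * j"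
proof (cases "a = 0")
  case False
  obtain p where p: "Kp p" "poly p x = a" using rep_ex by blast
  then have "p \<noteq> 0" using False by auto
  then show ?thesis using poly_sn[OF p(1)] p(2) by blast
qed simp

lemma gap: "sn c < sn a \<Longrightarrow> sn c + sn x \<le> sn a"
proof -
  assume h: "sn c < sn a"
  obtain j k where jk: "sn c = sn x * j" "sn a = sn x * k" using sn_mult by metis
  then have "j < k" using h by simp
  then have "j + 1 \<le> k" by simp
  then have "sn x * (j+1) \<le> sn x * k" by (rule mult_le_mono2)
  then show ?thesis using jk by (simp add: algebra_simps)
qed

end


lemma fac_0: "factroid F \<Longrightarrow> 0 \<in> F" unfolding factroid_def by blast
lemma fac_add: "factroid F \<Longrightarrow> a \<in> F \<Longrightarrow> b \<in> F \<Longrightarrow> a + b \<in> F" unfolding factroid_def by blast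
lemma fac_neg: "factroid F \<Longrightarrow> a \<in> F \<Longrightarrow> -a \<in> F" unfolding factroid_def by blast
lemma fac_diff: "factroid F \<Longrightarrow> a \<in> F \<Longrightarrow> b \<in> F \<Longrightarrow> a - b \<in> F"
  using fac_add[of F a "-b"] fac_neg[of F b] by simp
lemma fac_div: "factroid F \<Longrightarrow> c \<noteq> 0 \<Longrightarrow> c * a \<in> F \<Longrightarrow> a \<in> F" unfolding factroid_def by blast

lemma fac_UNIV: "factroid (UNIV :: 'a::idom set)" unfolding factroid_def by simp
lemma fac_zero: "factroid ({0} :: 'a::idom set)" unfolding factroid_def by auto

lemma C_inj: "inj_on (C_set \<sigma>) (range \<sigma>)"
proof (rule inj_onI)
  fix u v assume "u \<in> range \<sigma>" "v \<in> range \<sigma>" and e: "C_set \<sigma> u = C_set \<sigma> v"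
  then obtain a b where ab: "u = \<sigma> a" "v = \<sigma> b" by blast
  have "a \<in> C_set \<sigma> u" "b \<in> C_set \<sigma> v" unfolding C_set_def ab by auto
  then have "\<sigma> a \<le> v" "\<sigma> b \<le> u" using e unfolding C_set_def by auto
  then show "u = v" using ab by simp
qed

context addeucl begin

lemma C_sig: "a \<noteq> 0 \<Longrightarrow> C_set \<sigma> (\<sigma> a) = {b. sn b \<le> sn a}"
proof -
  assume a: "a \<noteq> 0"
  have "\<sigma> b \<le> \<sigma> a \<longleftrightarrow> sn b \<le> sn a" for b
    using a by (cases "b = 0") (simp_all add: sig_le_iff)
  then show ?thesis unfolding C_set_def by simp
qed

lemma C_0: "C_set \<sigma> (\<sigma> 0) = {0}"
proof -
  have "\<sigma> b \<le> -\<infinity> \<longleftrightarrow> b = 0" for b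
    using ef unfolding euclidean_function_def by simp
  then show ?thesis unfolding C_set_def by auto
qed

lemma C_inf: "C_set \<sigma> \<infinity> = UNIV"
  unfolding C_set_def by simp

lemma fac_C: "factroid {b. sn b \<le> n}"
  unfolding factroid_def
proof (intro conjI ballI allI impI; simp?)
  fix a b assume "sn a \<le> n" "sn b \<le> n"
  then show "sn (a+b) \<le> n" using nadd[of a b] by simp
next
  fix a b assume h: "b \<noteq> 0 \<and> sn (b*a) \<le> n"
  then show "sn a \<le> n" using sn_mono[of b a] by (simp add: mult.commute)
qed

lemma fac_unit: "factroid F \<Longrightarrow> a \<in> F \<Longrightarrow> sn u = 0 \<Longrightarrow> u \<noteq> 0 \<Longrightarrow> a*u \<in> F"
proof -
  assume h: "factroid F" "a \<in> F" "sn u = 0" "u \<noteq> 0"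
  then obtain v where v: "1 = u * v" using unit_sn by (meson dvdE)
  then have "v \<noteq> 0" by auto
  moreover have "v * (a*u) = a" using v by (simp add: ac_simps)
  ultimately show ?thesis using fac_div[OF h(1)] h(2) by metis
qed

lemma fac_K: "factroid F \<Longrightarrow> a \<in> F \<Longrightarrow> a \<noteq> 0 \<Longrightarrow> sn u = 0 \<Longrightarrow> u \<in> F"
proof -
  assume h: "factroid F" "a \<in> F" "a \<noteq> 0" "sn u = 0"
  have "1 \<in> F" using fac_div[OF h(1) h(3), of 1] h(2) by simp
  show "u \<in> F"
  proof (cases "u = 0")
    case True then show ?thesis using fac_0[OF h(1)] by simp
  next
    case False then show ?thesis using fac_unit[OF h(1) \<open>1 \<in> F\<close> h(4)] by simp
  qed
qed

lemma exists_x: "\<not> (\<forall>a. sn a = 0) \<Longrightarrow> \<exists>x. sn x > 0 \<and> (\<forall>a. sn a > 0 \<longrightarrow> sn x \<le> sn a)"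
proof -
  assume "\<not> (\<forall>a. sn a = 0)"
  then obtain a where "sn a > 0" by auto
  from ex_has_least_nat[of "\<lambda>a. sn a > 0" a sn, OF this] show ?thesis by blast
qed

end

context addeucl_x begin

lemma L1: "factroid F \<Longrightarrow> a \<in> F \<Longrightarrow> sn a > 0 \<Longrightarrow> \<exists>a'\<in>F. a' \<noteq> 0 \<and> sn a' + sn x = sn a"
proof -
  assume F: "factroid F" and a: "a \<in> F" "sn a > 0"
  have a0: "a \<noteq> 0" using a(2) by (metis less_irrefl sn0)
  obtain q r where qr: "a = x*q + r" "r = 0 \<or> sn r < sn x" using divi[OF x0] by blast
  have r0: "sn r = 0" using small_rem[OF qr(2)] .
  have rF: "r \<in> F" using fac_K[OF F a(1) a0 r0] .
  have "q \<noteq> 0" using qr(1) r0 a(2) by auto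
  have "sn (-r) < sn a" using r0 a by simp
  from strict[OF this] have "sn (a + -r) = sn a" by simp
  moreover have xq: "a + -r = x*q" using qr(1) by simp
  ultimately have "sn x + sn q = sn a" using mulD[OF x0 \<open>q \<noteq> 0\<close>] by simp
  moreover have "x*q \<in> F" using fac_add[OF F a(1) fac_neg[OF F rF]] xq by simp
  then have "q \<in> F" using fac_div[OF F x0] by blast
  ultimately show ?thesis using \<open>q \<noteq> 0\<close> by (metis add.commute)
qed

lemma L3: "factroid F \<Longrightarrow> a \<in> F \<Longrightarrow> a \<noteq> 0 \<Longrightarrow> sn b \<le> sn a \<Longrightarrow> b \<in> F"
proof -
  assume F: "factroid F"
  have "\<forall>a b. a \<in> F \<longrightarrow> a \<noteq> 0 \<longrightarrow> sn a = n \<longrightarrow> sn b \<le> n \<longrightarrow> b \<in> F" for n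
  proof (induction n rule: less_induct)
    case (less n)
    show ?case
    proof (intro allI impI)
      fix a b assume a: "a \<in> F" "a \<noteq> 0" "sn a = n" and b: "sn b \<le> n"
      show "b \<in> F"
      proof (cases "n = 0")
        case True
        then show ?thesis using fac_K[OF F a(1) a(2)] b by simp
      next
        case False
        then have "sn a > 0" using a(3) by simp
        then obtain a' where a': "a' \<in> F" "a' \<noteq> 0" "sn a' + sn x = sn a" using L1[OF F a(1)] by blast
        have "sn a' < n" using a'(3) a(3) xpos by simp
        then have IH0: "\<forall>a b. a \<in> F \<longrightarrow> a \<noteq> 0 \<longrightarrow> sn a = sn a' \<longrightarrow> sn b \<le> sn a' \<longrightarrow> b \<in> F"
          by (rule less.IH)
        have IH: "sn c \<le> sn a' \<Longrightarrow> c \<in> F" for c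
          using IH0 a'(1,2) by blast
        show ?thesis
        proof (cases "sn b < n")
          case True
          then have "sn b + sn x \<le> sn a" using gap a(3) by blast
          then show ?thesis using IH a'(3) by simp
        next
          case False
          then have bn: "sn b = n" using b by simp
          then have b0: "b \<noteq> 0" using \<open>n \<noteq> 0\<close> by auto
          obtain q r where qr: "b = a*q + r" "r = 0 \<or> sn r < sn a" using divi[OF a(2)] by blast
          have "sn r < sn a" using qr(2) a(3) False \<open>n \<noteq> 0\<close> by auto
          then have "sn r + sn x \<le> sn a" using gap by blast
          then have rF: "r \<in> F" using IH a'(3) by simp
          have "sn (-r) < sn b" using \<open>sn r < sn a\<close> a(3) bn by simp
          from strict[OF this] have e1: "sn (b + -r) = sn b" by simp
          have aq: "b + -r = a*q" using qr(1) by simp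
          have q0: "q \<noteq> 0"
          proof
            assume "q = 0"
            then have "b + -r = 0" using aq by simp
            then show False using e1 bn \<open>n \<noteq> 0\<close> by simp
          qed
          have "sn q = 0" using e1 aq mulD[OF a(2) q0] bn a(3) by simp
          then have "a*q \<in> F" using fac_unit[OF F a(1) _ q0] by simp
          then have "a*q + r \<in> F" using fac_add[OF F _ rF] by simp
          then show ?thesis using qr(1) by simp
        qed
      qed
    qed
  qed
  then show "a \<in> F \<Longrightarrow> a \<noteq> 0 \<Longrightarrow> sn b \<le> sn a \<Longrightarrow> b \<in> F" by blast
qed

lemma classify_x: "factroid F \<Longrightarrow> F \<in> C_set \<sigma> ` (range \<sigma> \<union> {\<infinity>})"
proof -
  assume F: "factroid F"
  show ?thesis
  proof (cases "\<forall>n. \<exists>a\<in>F. sn a > n")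
    case True
    have "F = UNIV"
    proof (intro set_eqI iffI)
      fix b
      obtain a where a: "a \<in> F" "sn a > sn b" using True by blast
      have "a \<noteq> 0"
      proof
        assume "a = 0" then show False using a(2) by simp
      qed
      then show "b \<in> F" using L3[OF F a(1)] a(2) by simp
    qed simp
    moreover have "C_set \<sigma> \<infinity> \<in> C_set \<sigma> ` (range \<sigma> \<union> {\<infinity>})" by (intro imageI) simp
    ultimately show ?thesis using C_inf by simp
  next
    case False
    then obtain B where "\<not> (\<exists>a\<in>F. sn a > B)" by blast
    then have B: "\<forall>a\<in>F. sn a \<le> B" by (simp add: not_less)
    show ?thesis
    proof (cases "F \<subseteq> {0}")
      case True
      then have "F = {0}" using fac_0[OF F] by auto
      moreover have "C_set \<sigma> (\<sigma> 0) \<in> C_set \<sigma> ` (range \<sigma> \<union> {\<infinity>})" by (intro imageI UnI1 rangeI)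
    ultimately show ?thesis using C_0 by simp
    next
      case False
      define S where "S = sn ` (F - {0})"
      have "S \<subseteq> {..B}" unfolding S_def using B by blast
      then have fin: "finite S" using finite_subset by blast
      have ne: "S \<noteq> {}" unfolding S_def using False by blast
      have "Max S \<in> S" using Max_in[OF fin ne] .
      then obtain a where a0: "a \<in> F - {0}" and a1: "Max S = sn a"
        unfolding S_def by (rule imageE)
      have a: "a \<in> F" "a \<noteq> 0" "sn a = Max S" using a0 a1 by auto
      have "F = {b. sn b \<le> sn a}"
      proof (intro set_eqI iffI)
        fix b assume bF: "b \<in> F"
        show "b \<in> {b. sn b \<le> sn a}"
        proof (cases "b = 0")
          case False
          then have "sn b \<in> S" unfolding S_def using bF by blast
          then show ?thesis using Max_ge[OF fin] a(3) by simp
        qed simp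
      next
        fix b assume "b \<in> {b. sn b \<le> sn a}"
        then show "b \<in> F" using L3[OF F a(1) a(2)] by simp
      qed
      then have "F = C_set \<sigma> (\<sigma> a)" using C_sig[OF a(2)] by simp
      moreover have "C_set \<sigma> (\<sigma> a) \<in> C_set \<sigma> ` (range \<sigma> \<union> {\<infinity>})" by (intro imageI) simp
      ultimately show ?thesis by simp
    qed
  qed
qed

end

context addeucl begin

lemma classify: "factroid F \<Longrightarrow> F \<in> C_set \<sigma> ` (range \<sigma> \<union> {\<infinity>})"
proof (cases "\<forall>a. sn a = 0")
  case True
  assume F: "factroid F"
  show ?thesis
  proof (cases "F \<subseteq> {0}")
    case True
    then have "F = {0}" using fac_0[OF F] by auto
    moreover have "C_set \<sigma> (\<sigma> 0) \<in> C_set \<sigma> ` (range \<sigma> \<union> {\<infinity>})" by (intro imageI UnI1 rangeI)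
    ultimately show ?thesis using C_0 by simp
  next
    case False
    then obtain a where a: "a \<in> F" "a \<noteq> 0" by auto
    have "F = UNIV"
    proof (intro set_eqI iffI)
      fix b show "b \<in> F" using fac_K[OF F a(1) a(2)] True by simp
    qed simp
    moreover have "C_set \<sigma> \<infinity> \<in> C_set \<sigma> ` (range \<sigma> \<union> {\<infinity>})" by (intro imageI) simp
    ultimately show ?thesis using C_inf by simp
  qed
next
  case False
  assume F: "factroid F"
  obtain x where "sn x > 0" "\<forall>a. sn a > 0 \<longrightarrow> sn x \<le> sn a" using exists_x[OF False] by blast
  then have ax: "addeucl_x_axioms \<sigma> x" unfolding addeucl_x_axioms_def by blast
  interpret X: addeucl_x \<sigma> x by (rule addeucl_x.intro[OF addeucl_axioms ax])
  show ?thesis using X.classify_x[OF F] .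
qed

lemma a_e: "cond_e \<sigma>"
  unfolding cond_e_def
proof (intro conjI)
  show "{F. factroid F} = C_set \<sigma> ` (range \<sigma> \<union> {\<infinity>})"
  proof
    show "{F. factroid F} \<subseteq> C_set \<sigma> ` (range \<sigma> \<union> {\<infinity>})" using classify by blast
  next
    have "factroid (C_set \<sigma> v)" if vin: "v \<in> range \<sigma> \<union> {\<infinity>}" for v
    proof -
      consider "v = \<infinity>" | a where "v = \<sigma> a" using vin by blast
      then show ?thesis
      proof cases
        case 1 then show ?thesis using C_inf fac_UNIV by simp
      next
        case (2 a)
        show ?thesis
        proof (cases "a = 0")
          case True then show ?thesis using 2 C_0 fac_zero by simp
        next
          case False then show ?thesis using 2 C_sig[OF False] fac_C by simp
        qed
      qed
    qed
    then show "C_set \<sigma> ` (range \<sigma> \<union> {\<infinity>}) \<subseteq> {F. factroid F}" by blast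
  qed
  show "inj_on (C_set \<sigma>) (range \<sigma>)" by (rule C_inj)
  have m: "\<sigma> (a*b) = \<sigma> a + \<sigma> b" for a b using mul_pt av addv_def by blast
  show "\<forall>m\<in>range \<sigma>. \<forall>n\<in>range \<sigma>. {x * y |x y. x \<in> D_set \<sigma> m \<and> y \<in> D_set \<sigma> n} \<subseteq> D_set \<sigma> (m + n)"
  proof (intro ballI subsetI)
    fix m n z assume "z \<in> {x * y |x y. x \<in> D_set \<sigma> m \<and> y \<in> D_set \<sigma> n}"
    then obtain u v where uv: "z = u*v" "\<sigma> u = m" "\<sigma> v = n" unfolding D_set_def by blast
    then show "z \<in> D_set \<sigma> (m + n)" unfolding D_set_def using m[of u v] by simp
  qed
qed

end


definition sig_f :: "'a::idom \<Rightarrow> ereal" where "sig_f a = (if a = 0 then -\<infinity> else 0)"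

lemma field_sigma:
  assumes f: "is_field_dom TYPE('a::idom)"
  shows "euclidean_function (sig_f :: 'a \<Rightarrow> ereal) \<and> cond_a (sig_f :: 'a \<Rightarrow> ereal)"
proof -
  have u: "(b::'a) \<noteq> 0 \<Longrightarrow> b dvd 1" for b using f unfolding is_field_dom_def by blast
  have e: "euclidean_function (sig_f :: 'a \<Rightarrow> ereal)"
    unfolding euclidean_function_def
  proof (intro conjI allI impI)
    fix a :: 'a show "sig_f a = -\<infinity> \<longleftrightarrow> a = 0" by (simp add: sig_f_def)
  next
    fix a :: 'a assume "a \<noteq> 0"
    then show "\<exists>n::nat. sig_f a = ereal (real n)" by (intro exI[of _ 0]) (simp add: sig_f_def zero_ereal_def)
  next
    fix a b :: 'a assume b: "b \<noteq> 0"
    then have "b dvd a" using u by (meson dvd_trans one_dvd)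
    then obtain q where "a = b * q" by (elim dvdE)
    then show "\<exists>q r. a = b * q + r \<and> sig_f r < sig_f b" using b by (intro exI[of _ q] exI[of _ 0]) (simp add: sig_f_def)
  next
    fix a b :: 'a assume b: "b \<noteq> 0"
    show "sig_f a \<le> sig_f (a * b)" using b by (simp add: sig_f_def)
  qed
  have "cond_a (sig_f :: 'a \<Rightarrow> ereal)"
    unfolding cond_a_def nonarch_euclidean_def
  proof (intro conjI allI)
    fix a b :: 'a
    show "sig_f (a + b) \<le> max (sig_f a) (sig_f b)" by (simp add: sig_f_def)
    show "sig_f (a * b) = sig_f a + sig_f b" by (simp add: sig_f_def)
  qed
  then show ?thesis using e by blast
qed

locale pring =
  fixes K :: "'a::idom set" and x :: 'a
  assumes sf: "subfield K"
    and uq: "\<And>a. \<exists>!p::'a poly. (\<forall>i. coeff p i \<in> K) \<and> poly p x = a"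
begin

definition Kc :: "'a poly \<Rightarrow> bool" where "Kc p \<longleftrightarrow> (\<forall>i. coeff p i \<in> K)"

definition P :: "'a \<Rightarrow> 'a poly" where "P a = (THE p. Kc p \<and> poly p x = a)"

lemma P_spec: "Kc (P a) \<and> poly (P a) x = a"
  unfolding P_def Kc_def using theI'[OF uq[of a]] .

lemma P_eq: "Kc p \<Longrightarrow> poly p x = a \<Longrightarrow> P a = p"
  unfolding P_def Kc_def using the1_equality[OF uq[of a]] by blast

lemma K0: "0 \<in> K" and K1: "1 \<in> K" and Kadd: "u \<in> K \<Longrightarrow> v \<in> K \<Longrightarrow> u + v \<in> K"
  and Kmul: "u \<in> K \<Longrightarrow> v \<in> K \<Longrightarrow> u * v \<in> K" and Kneg: "u \<in> K \<Longrightarrow> -u \<in> K"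
  and Kinv: "u \<in> K \<Longrightarrow> u \<noteq> 0 \<Longrightarrow> \<exists>v\<in>K. u * v = 1"
  using sf unfolding subfield_def by blast+

lemma Ksub: "u \<in> K \<Longrightarrow> v \<in> K \<Longrightarrow> u - v \<in> K"
  using Kadd[of u "-v"] Kneg[of v] by simp

lemma Ksum: "finite A \<Longrightarrow> (\<And>i. i \<in> A \<Longrightarrow> f i \<in> K) \<Longrightarrow> sum f A \<in> K"
  by (induction A rule: finite_induct) (auto intro: K0 Kadd)

lemma Kc0[simp]: "Kc 0" unfolding Kc_def using K0 by simp
lemma Kc_add: "Kc p \<Longrightarrow> Kc q \<Longrightarrow> Kc (p + q)" unfolding Kc_def using Kadd by simp
lemma Kc_diff: "Kc p \<Longrightarrow> Kc q \<Longrightarrow> Kc (p - q)" unfolding Kc_def using Ksub by simp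
lemma Kc_mult: "Kc p \<Longrightarrow> Kc q \<Longrightarrow> Kc (p * q)"
  unfolding Kc_def coeff_mult by (intro allI Ksum) (auto intro: Kmul)
lemma Kc_monom: "c \<in> K \<Longrightarrow> Kc (monom c n)" unfolding Kc_def using K0 by (simp add: coeff_monom)

lemma P0: "P 0 = 0" using P_eq[of 0 0] by simp
lemma P_add: "P (a + b) = P a + P b"
  using P_eq[of "P a + P b" "a + b"] P_spec[of a] P_spec[of b] Kc_add by simp
lemma P_mult: "P (a * b) = P a * P b"
  using P_eq[of "P a * P b" "a * b"] P_spec[of a] P_spec[of b] Kc_mult by simp
lemma P_zero_iff: "P a = 0 \<longleftrightarrow> a = 0"
  using P_spec[of a] P0 by force

lemma pdiv: "Kc p \<Longrightarrow> Kc g \<Longrightarrow> g \<noteq> 0 \<Longrightarrow>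
  \<exists>q r. Kc q \<and> Kc r \<and> p = g * q + r \<and> (r = 0 \<or> degree r < degree g)"
proof -
  assume kg: "Kc g" and g0: "g \<noteq> 0"
  have "\<forall>p. degree p = n \<longrightarrow> Kc p \<longrightarrow> (\<exists>q r. Kc q \<and> Kc r \<and> p = g * q + r \<and> (r = 0 \<or> degree r < degree g))" for n
  proof (induction n rule: less_induct)
    case (less n)
    show ?case
    proof (intro allI impI)
      fix p assume pn: "degree p = n" and kp: "Kc p"
      show "\<exists>q r. Kc q \<and> Kc r \<and> p = g * q + r \<and> (r = 0 \<or> degree r < degree g)"
      proof (cases "degree p < degree g")
        case True
        then show ?thesis using kp by (intro exI[of _ 0] exI[of _ p]) simp
      next
        case False
        have lg: "lead_coeff g \<in> K" "lead_coeff g \<noteq> 0" using kg g0 unfolding Kc_def by auto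
        obtain y where y: "y \<in> K" "lead_coeff g * y = 1" using Kinv[OF lg] by blast
        define c where "c = lead_coeff p * y"
        define k where "k = degree p - degree g"
        define p' where "p' = p - monom c k * g"
        have cK: "c \<in> K" unfolding c_def using kp y(1) Kmul unfolding Kc_def by blast
        have kp': "Kc p'" unfolding p'_def using Kc_diff[OF kp Kc_mult[OF Kc_monom[OF cK] kg]] .
        have cz: "coeff p' m = 0" if m: "m \<ge> degree p" for m
        proof (cases "m = degree p")
          case True
          have "coeff (monom c k * g) m = c * coeff g (m - k)"
            using False True unfolding k_def by (simp add: coeff_monom_mult)
          also have "m - k = degree g" using False True unfolding k_def by simp
          also have "c * lead_coeff g = lead_coeff p" unfolding c_def using y(2) by (simp add: ac_simps)
          finally show ?thesis unfolding p'_def using True by simp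
        next
          case F2: False
          then have m1: "m > degree p" using m by simp
          then have "coeff p m = 0" by (simp add: coeff_eq_0)
          moreover have "coeff g (m - k) = 0" using m1 False unfolding k_def by (intro coeff_eq_0) simp
          ultimately show ?thesis unfolding p'_def using m1 by (simp add: coeff_monom_mult)
        qed
        show ?thesis
        proof (cases "p' = 0")
          case True
          then have "p = g * monom c k + 0" unfolding p'_def by (simp add: ac_simps)
          then show ?thesis using Kc_monom[OF cK] by (intro exI[of _ "monom c k"] exI[of _ 0]) simp
        next
          case F3: False
          have "degree p' < degree p"
          proof (rule ccontr)
            assume "\<not> degree p' < degree p"
            then have "coeff p' (degree p') = 0" using cz by simp
            then show False using F3 by simp
          qed
          then obtain q r where qr: "Kc q" "Kc r" "p' = g * q + r" "r = 0 \<or> degree r < degree g"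
            using less.IH[of "degree p'"] pn kp' by blast
          have "p = g * (q + monom c k) + r" using qr(3) unfolding p'_def by (simp add: algebra_simps)
          then show ?thesis using qr Kc_add[OF qr(1) Kc_monom[OF cK]] by blast
        qed
      qed
    qed
  qed
  then show "Kc p \<Longrightarrow> \<exists>q r. Kc q \<and> Kc r \<and> p = g * q + r \<and> (r = 0 \<or> degree r < degree g)" by blast
qed

definition sg :: "'a \<Rightarrow> ereal" where "sg a = (if a = 0 then -\<infinity> else ereal (real (degree (P a))))"

lemma sg_eucl: "euclidean_function sg"
  unfolding euclidean_function_def
proof (intro conjI allI impI)
  fix a show "sg a = -\<infinity> \<longleftrightarrow> a = 0" by (simp add: sg_def)
next
  fix a :: 'a assume "a \<noteq> 0"
  then show "\<exists>n::nat. sg a = ereal (real n)" by (simp add: sg_def)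
next
  fix a b :: 'a assume b: "b \<noteq> 0"
  have pb: "P b \<noteq> 0" using b P_zero_iff by simp
  obtain q r where qr: "Kc q" "Kc r" "P a = P b * q + r" "r = 0 \<or> degree r < degree (P b)"
    using pdiv[OF conjunct1[OF P_spec[of a]] conjunct1[OF P_spec[of b]] pb] by blast
  have "a = poly (P a) x" using P_spec by simp
  also have "\<dots> = b * poly q x + poly r x" using qr(3) P_spec[of b] by simp
  finally have eq: "a = b * poly q x + poly r x" .
  have "sg (poly r x) < sg b"
  proof (cases "poly r x = 0")
    case True then show ?thesis using b by (simp add: sg_def)
  next
    case False
    then have "r \<noteq> 0" by auto
    moreover have "P (poly r x) = r" using P_eq[OF qr(2)] by simp
    ultimately show ?thesis using qr(4) False b by (simp add: sg_def)
  qed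
  then show "\<exists>q r. a = b * q + r \<and> sg r < sg b" using eq by blast
next
  fix a b :: 'a assume b: "b \<noteq> 0"
  show "sg a \<le> sg (a * b)"
  proof (cases "a = 0")
    case False
    then have "P a \<noteq> 0" "P b \<noteq> 0" using b P_zero_iff by auto
    then have "degree (P (a*b)) = degree (P a) + degree (P b)" by (simp add: P_mult degree_mult_eq)
    then show ?thesis using False b by (simp add: sg_def)
  qed (simp add: sg_def)
qed

lemma sg_cond_a: "cond_a sg"
  unfolding cond_a_def nonarch_euclidean_def
proof (intro conjI allI)
  fix a b :: 'a
  show "sg (a + b) \<le> max (sg a) (sg b)"
  proof (cases "a + b = 0 \<or> a = 0 \<or> b = 0")
    case True then show ?thesis by (auto simp: sg_def)
  next
    case False
    have "degree (P (a+b)) \<le> max (degree (P a)) (degree (P b))" using degree_add_le_max by (simp add: P_add)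
    then show ?thesis using False by (simp add: sg_def max_def split: if_splits)
  qed
  show "sg (a * b) = sg a + sg b"
  proof (cases "a = 0 \<or> b = 0")
    case True then show ?thesis by (auto simp: sg_def)
  next
    case False
    then have "P a \<noteq> 0" "P b \<noteq> 0" using P_zero_iff by auto
    then have "degree (P (a*b)) = degree (P a) + degree (P b)" by (simp add: P_mult degree_mult_eq)
    then show ?thesis using False by (simp add: sg_def)
  qed
qed

end


lemma part1:
  fixes \<sigma> :: "'a::idom \<Rightarrow> ereal"
  assumes ef: "euclidean_function \<sigma>"
  shows "{a. \<sigma> a \<le> \<sigma> 1} = {a. a dvd 1} \<union> {0} \<and>
            (cond_a \<sigma> \<longleftrightarrow> cond_b \<sigma>) \<and> (cond_b \<sigma> \<longleftrightarrow> cond_c \<sigma>) \<and>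
            (cond_c \<sigma> \<longleftrightarrow> cond_d \<sigma>) \<and> (cond_d \<sigma> \<longleftrightarrow> cond_e \<sigma>)"
proof -
  interpret E: eucl \<sigma> by (rule eucl.intro[OF ef])
  have ab: "cond_a \<sigma> \<longleftrightarrow> cond_b \<sigma>" using E.cond_a_iff E.cond_b_iff by simp
  have ae: "cond_a \<sigma> \<Longrightarrow> cond_e \<sigma>"
  proof -
    assume "cond_a \<sigma>"
    then have "addeucl_axioms \<sigma>" unfolding addeucl_axioms_def using E.cond_a_iff by simp
    then interpret A: addeucl \<sigma> by (rule addeucl.intro[OF E.eucl_axioms])
    show "cond_e \<sigma>" by (rule A.a_e)
  qed
  show ?thesis using ab ae E.e_a E.b_c E.c_d E.d_b E.C1 by blast
qed

lemma part2_fwd: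
  fixes \<sigma> :: "'a::idom \<Rightarrow> ereal"
  assumes ef: "euclidean_function \<sigma>" and ca: "cond_a \<sigma>"
  shows "is_field_dom TYPE('a) \<or> is_poly_ring_over_field TYPE('a)"
proof -
  interpret E: eucl \<sigma> by (rule eucl.intro[OF ef])
  have "addeucl_axioms \<sigma>" unfolding addeucl_axioms_def using E.cond_a_iff ca by simp
  then interpret A: addeucl \<sigma> by (rule addeucl.intro[OF E.eucl_axioms])
  show ?thesis
  proof (cases "\<forall>a. E.sn a = 0")
    case True then show ?thesis using A.field_case by blast
  next
    case False
    obtain x where "E.sn x > 0" "\<forall>a. E.sn a > 0 \<longrightarrow> E.sn x \<le> E.sn a" using A.exists_x[OF False] by blast
    then have ax: "addeucl_x_axioms \<sigma> x" unfolding addeucl_x_axioms_def by blast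
    interpret X: addeucl_x \<sigma> x by (rule addeucl_x.intro[OF A.addeucl_axioms ax])
    show ?thesis using X.poly_ring by blast
  qed
qed

lemma part2_bwd:
  assumes "is_field_dom TYPE('a::idom) \<or> is_poly_ring_over_field TYPE('a)"
  shows "\<exists>\<sigma>::'a \<Rightarrow> ereal. euclidean_function \<sigma> \<and> cond_a \<sigma>"
proof (cases "is_field_dom TYPE('a)")
  case True then show ?thesis using field_sigma by blast
next
  case False
  then have "is_poly_ring_over_field TYPE('a)" using assms by blast
  then obtain K :: "'a set" and x where "subfield K" "\<forall>a. \<exists>!p::'a poly. (\<forall>i. coeff p i \<in> K) \<and> poly p x = a"
    unfolding is_poly_ring_over_field_def by blast
  then interpret R: pring K x by unfold_locales blast+
  show ?thesis using R.sg_eucl R.sg_cond_a by blast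
qed

theorem proposition8p4:
  shows "(\<forall>\<sigma>::'a::idom \<Rightarrow> ereal. euclidean_function \<sigma> \<longrightarrow>
            {a. \<sigma> a \<le> \<sigma> 1} = {a. a dvd 1} \<union> {0} \<and>
            (cond_a \<sigma> \<longleftrightarrow> cond_b \<sigma>) \<and> (cond_b \<sigma> \<longleftrightarrow> cond_c \<sigma>) \<and>
            (cond_c \<sigma> \<longleftrightarrow> cond_d \<sigma>) \<and> (cond_d \<sigma> \<longleftrightarrow> cond_e \<sigma>)) \<and>
         ((\<exists>\<sigma>::'a \<Rightarrow> ereal. euclidean_function \<sigma> \<and> cond_a \<sigma>) \<longleftrightarrow>
            is_field_dom TYPE('a) \<or> is_poly_ring_over_field TYPE('a))"
proof (rule conjI)
  show "\<forall>\<sigma>::'a::idom \<Rightarrow> ereal. euclidean_function \<sigma> \<longrightarrow>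
            {a. \<sigma> a \<le> \<sigma> 1} = {a. a dvd 1} \<union> {0} \<and>
            (cond_a \<sigma> \<longleftrightarrow> cond_b \<sigma>) \<and> (cond_b \<sigma> \<longleftrightarrow> cond_c \<sigma>) \<and>
            (cond_c \<sigma> \<longleftrightarrow> cond_d \<sigma>) \<and> (cond_d \<sigma> \<longleftrightarrow> cond_e \<sigma>)"
    using part1 by blast
  show "(\<exists>\<sigma>::'a \<Rightarrow> ereal. euclidean_function \<sigma> \<and> cond_a \<sigma>) \<longleftrightarrow>
            is_field_dom TYPE('a) \<or> is_poly_ring_over_field TYPE('a)"
  proof
    assume "\<exists>\<sigma>::'a \<Rightarrow> ereal. euclidean_function \<sigma> \<and> cond_a \<sigma>"
    then obtain \<sigma> :: "'a \<Rightarrow> ereal" where "euclidean_function \<sigma>" "cond_a \<sigma>" by blast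
    then show "is_field_dom TYPE('a) \<or> is_poly_ring_over_field TYPE('a)" by (rule part2_fwd)
  next
    assume "is_field_dom TYPE('a) \<or> is_poly_ring_over_field TYPE('a)"
    then show "\<exists>\<sigma>::'a \<Rightarrow> ereal. euclidean_function \<sigma> \<and> cond_a \<sigma>" by (rule part2_bwd)
  qed
qed

end
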